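(* Let $G$ be a graph without isolated vertices. Then $\partial\Gamma(G)=2$ if and only if either $G$ is the complete bipartite graph $K_{n,m}$ for some $n\ge 2$ and $m\ge 1$, or $G$ is a disjoint union of copies of $K_2$ (i.e. every component is a single edge).
   Context: A proper $k$-coloring of $G$ is a surjective map $c:V(G)\to\{1,\ldots,k\}$ with $c(u)\ne c(v)$ for every edge $uv$. A vertex of color $i$ is a Grundy vertex if it has, for every $j<i$, a neighbor of color $j$. A partial Grundy $k$-coloring is a proper $k$-coloring in which every color class contains at least one Grundy vertex; $\partial\Gamma(G)$ is the largest $k$ such that $G$ has a partial Grundy $k$-coloring. *)

theory Defs
  imports Main
begin

definition simple_graph :: "'a set \<Rightarrow> ('a \<Rightarrow> 'a \<Rightarrow> bool) \<Rightarrow> bool" where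
  "simple_graph V E \<longleftrightarrow> finite V \<and> V \<noteq> {} \<and>
     (\<forall>u v. E u v \<longrightarrow> u \<in> V \<and> v \<in> V) \<and>
     (\<forall>u v. E u v \<longrightarrow> E v u) \<and> (\<forall>v. \<not> E v v)"

definition no_isolated :: "'a set \<Rightarrow> ('a \<Rightarrow> 'a \<Rightarrow> bool) \<Rightarrow> bool" where
  "no_isolated V E \<longleftrightarrow> (\<forall>v\<in>V. \<exists>u\<in>V. E v u)"

definition proper_coloring :: "'a set \<Rightarrow> ('a \<Rightarrow> 'a \<Rightarrow> bool) \<Rightarrow> ('a \<Rightarrow> nat) \<Rightarrow> nat \<Rightarrow> bool" where
  "proper_coloring V E c k \<longleftrightarrow> c ` V = {1..k} \<and> (\<forall>u\<in>V. \<forall>v\<in>V. E u v \<longrightarrow> c u \<noteq> c v)"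

definition grundy_vertex :: "'a set \<Rightarrow> ('a \<Rightarrow> 'a \<Rightarrow> bool) \<Rightarrow> ('a \<Rightarrow> nat) \<Rightarrow> 'a \<Rightarrow> bool" where
  "grundy_vertex V E c v \<longleftrightarrow> v \<in> V \<and> (\<forall>j. 1 \<le> j \<and> j < c v \<longrightarrow> (\<exists>u\<in>V. E v u \<and> c u = j))"

definition partial_grundy_coloring :: "'a set \<Rightarrow> ('a \<Rightarrow> 'a \<Rightarrow> bool) \<Rightarrow> ('a \<Rightarrow> nat) \<Rightarrow> nat \<Rightarrow> bool" where
  "partial_grundy_coloring V E c k \<longleftrightarrow> proper_coloring V E c k \<and>
     (\<forall>i\<in>{1..k}. \<exists>v\<in>V. c v = i \<and> grundy_vertex V E c v)"

definition partial_grundy_number :: "'a set \<Rightarrow> ('a \<Rightarrow> 'a \<Rightarrow> bool) \<Rightarrow> nat" where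
  "partial_grundy_number V E = Max {k. \<exists>c. partial_grundy_coloring V E c k}"

definition is_complete_bipartite :: "'a set \<Rightarrow> ('a \<Rightarrow> 'a \<Rightarrow> bool) \<Rightarrow> nat \<Rightarrow> nat \<Rightarrow> bool" where
  "is_complete_bipartite V E n m \<longleftrightarrow> (\<exists>A B. A \<inter> B = {} \<and> A \<union> B = V \<and> card A = n \<and> card B = m \<and>
     (\<forall>u\<in>V. \<forall>v\<in>V. E u v \<longleftrightarrow> (u \<in> A \<and> v \<in> B) \<or> (u \<in> B \<and> v \<in> A)))"

definition disjoint_union_K2 :: "'a set \<Rightarrow> ('a \<Rightarrow> 'a \<Rightarrow> bool) \<Rightarrow> bool" where
  "disjoint_union_K2 V E \<longleftrightarrow> (\<forall>v\<in>V. \<exists>!u. u \<in> V \<and> E v u)"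

end

theory Submission
  imports Defs
begin

definition gin :: "'a set \<Rightarrow> ('a \<Rightarrow> 'a \<Rightarrow> bool) \<Rightarrow> ('a \<Rightarrow> nat) \<Rightarrow> 'a \<Rightarrow> bool" where
  "gin S E c v \<longleftrightarrow> (\<forall>j. 1 \<le> j \<and> j < c v \<longrightarrow> (\<exists>u\<in>S. E v u \<and> c u = j))"

definition seed :: "'a set \<Rightarrow> ('a \<Rightarrow> 'a \<Rightarrow> bool) \<Rightarrow> 'a set \<Rightarrow> ('a \<Rightarrow> nat) \<Rightarrow> nat \<Rightarrow> bool" where
  "seed V E S c k \<longleftrightarrow> S \<subseteq> V \<and> c ` S = {1..k} \<and> (\<forall>u\<in>S. \<forall>v\<in>S. E u v \<longrightarrow> c u \<noteq> c v) \<and>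
     (\<forall>i\<in>{1..k}. \<exists>v\<in>S. c v = i \<and> gin S E c v)"

lemma seed_step:
  assumes sg: "simple_graph V E" and s: "seed V E S c k" and w: "w \<in> V" "w \<notin> S"
  shows "\<exists>c' k'. k \<le> k' \<and> seed V E (insert w S) c' k'"
proof -
  define P where "P j \<longleftrightarrow> 1 \<le> j \<and> (\<forall>u\<in>S. E w u \<longrightarrow> c u \<noteq> j)" for j
  have Pk: "P (Suc k)"
  proof -
    have "\<forall>u\<in>S. c u \<le> k" using s unfolding seed_def by auto
    then show ?thesis unfolding P_def by auto
  qed
  define m where "m = (LEAST j. P j)"
  have Pm: "P m" unfolding m_def using LeastI[of P, OF Pk] .
  have mle: "m \<le> Suc k" unfolding m_def using Least_le[of P, OF Pk] .
  have notP: "\<And>j. j < m \<Longrightarrow> \<not> P j" unfolding m_def using not_less_Least by blast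
  define c' where "c' = c(w := m)"
  have img0: "c' ` S = c ` S" unfolding c'_def using w(2) by (auto intro!: image_cong)
  have img: "c' ` insert w S = {1..max k m}"
  proof -
    have "c' ` insert w S = insert m {1..k}" using img0 s unfolding seed_def c'_def by auto
    also have "\<dots> = {1..max k m}" using Pm mle unfolding P_def
      by (cases "m \<le> k") (auto simp: max_def)
    finally show ?thesis .
  qed
  have symE: "\<And>u v. E u v \<Longrightarrow> E v u" and irr: "\<And>v. \<not> E v v"
    using sg unfolding simple_graph_def by auto
  have "seed V E (insert w S) c' (max k m)"
    unfolding seed_def
  proof (intro conjI)
    show "insert w S \<subseteq> V" using s w unfolding seed_def by auto
    show "c' ` insert w S = {1..max k m}" by (rule img)
    show "\<forall>u\<in>insert w S. \<forall>v\<in>insert w S. E u v \<longrightarrow> c' u \<noteq> c' v"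
    proof (intro ballI impI)
      fix u v assume u: "u \<in> insert w S" and v: "v \<in> insert w S" and e: "E u v"
      show "c' u \<noteq> c' v"
      proof (cases "u = w")
        case True
        then have "v \<noteq> w" using e irr by auto
        then show ?thesis using True Pm v e unfolding P_def c'_def by auto
      next
        case False
        show ?thesis
        proof (cases "v = w")
          case True
          then show ?thesis using False Pm u e symE unfolding P_def c'_def by fastforce
        next
          case False2: False
          then show ?thesis using False u v e s unfolding seed_def c'_def by auto
        qed
      qed
    qed
    show "\<forall>i\<in>{1..max k m}. \<exists>v\<in>insert w S. c' v = i \<and> gin (insert w S) E c' v"
    proof
      fix i assume i: "i \<in> {1..max k m}"
      show "\<exists>v\<in>insert w S. c' v = i \<and> gin (insert w S) E c' v"
      proof (cases "i \<le> k")
        case True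
        then have "i \<in> {1..k}" using i by auto
        then obtain v where v: "v \<in> S" "c v = i" "gin S E c v" using s unfolding seed_def by blast
        have vw: "v \<noteq> w" using v w(2) by auto
        have "gin (insert w S) E c' v"
          unfolding gin_def
        proof (intro allI impI)
          fix j assume j: "1 \<le> j \<and> j < c' v"
          then obtain u where "u \<in> S" "E v u" "c u = j" using v vw unfolding gin_def c'_def by auto
          then show "\<exists>u\<in>insert w S. E v u \<and> c' u = j" using w(2) unfolding c'_def by (intro bexI[of _ u]) auto
        qed
        then show ?thesis using v vw unfolding c'_def by (intro bexI[of _ v]) auto
      next
        case False
        then have im: "i = m" using i mle by auto
        have "gin (insert w S) E c' w"
          unfolding gin_def
        proof (intro allI impI)
          fix j assume j: "1 \<le> j \<and> j < c' w"
          then have "j < m" unfolding c'_def by auto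
          then have "\<not> P j" by (rule notP)
          then obtain u where "u \<in> S" "E w u" "c u = j" using j unfolding P_def by auto
          then show "\<exists>u\<in>insert w S. E w u \<and> c' u = j" using w(2) unfolding c'_def by (intro bexI[of _ u]) auto
        qed
        then show ?thesis using im unfolding c'_def by (intro bexI[of _ w]) auto
      qed
    qed
  qed
  then show ?thesis by (intro exI[of _ c'] exI[of _ "max k m"]) auto
qed

lemma seed_ext:
  assumes sg: "simple_graph V E" and fin: "finite T"
  shows "T \<subseteq> V \<Longrightarrow> seed V E S c k \<Longrightarrow> \<exists>c' k'. k \<le> k' \<and> seed V E (S \<union> T) c' k'"
  using fin
proof (induction T arbitrary: S c k rule: finite_induct)
  case empty
  then show ?case by auto
next
  case (insert w T)
  obtain c1 k1 where 1: "k \<le> k1" "seed V E (S \<union> T) c1 k1" using insert.IH insert.prems by blast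
  show ?case
  proof (cases "w \<in> S \<union> T")
    case True
    then have "S \<union> insert w T = S \<union> T" by auto
    then show ?thesis using 1 by auto
  next
    case False
    obtain c2 k2 where "k1 \<le> k2" "seed V E (insert w (S \<union> T)) c2 k2"
      using seed_step[OF sg 1(2), of w] False insert.prems by auto
    then show ?thesis using 1 by (intro exI[of _ c2] exI[of _ k2]) auto
  qed
qed

lemma seed_full:
  assumes "seed V E V c k"
  shows "partial_grundy_coloring V E c k"
  using assms unfolding seed_def partial_grundy_coloring_def proper_coloring_def grundy_vertex_def gin_def
  by blast

lemma seed_to_pgc:
  assumes sg: "simple_graph V E" and s: "seed V E S c k"
  shows "\<exists>c' k'. k \<le> k' \<and> partial_grundy_coloring V E c' k'"
proof -
  have fin: "finite (V - S)" using sg unfolding simple_graph_def by auto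
  obtain c' k' where "k \<le> k'" "seed V E (S \<union> (V - S)) c' k'"
    using seed_ext[OF sg fin, of S c k] s by auto
  moreover have "S \<union> (V - S) = V" using s unfolding seed_def by auto
  ultimately show ?thesis using seed_full by metis
qed

lemma pgc_le:
  assumes "finite V" "partial_grundy_coloring V E c k"
  shows "k \<le> card V"
proof -
  have "c ` V = {1..k}" using assms unfolding partial_grundy_coloring_def proper_coloring_def by auto
  then have "card {1..k} \<le> card V" using card_image_le[OF assms(1), of c] by simp
  then show ?thesis by simp
qed


lemma gv_nb:
  assumes "grundy_vertex V E c v" "1 \<le> j" "j < c v"
  shows "\<exists>u\<in>V. E v u \<and> c u = j"
  using assms by (simp add: grundy_vertex_def)

lemma pgc_proper:
  assumes "partial_grundy_coloring V E c k" "u \<in> V" "v \<in> V" "E u v"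
  shows "c u \<noteq> c v"
  using assms by (simp add: partial_grundy_coloring_def proper_coloring_def)

lemma cb_aux:
  assumes AB: "A \<inter> B = {}" "A \<union> B = V"
    and ch: "\<forall>u\<in>V. \<forall>v\<in>V. E u v \<longleftrightarrow> (u \<in> A \<and> v \<in> B) \<or> (u \<in> B \<and> v \<in> A)"
    and pg: "partial_grundy_coloring V E c k" and k: "k \<ge> 3"
    and v: "v \<in> A" "c v = 3" "grundy_vertex V E c v"
  shows False
proof -
  obtain u1 where u1: "u1 \<in> V" "E v u1" "c u1 = 1" using gv_nb[OF v(3), of 1] v(2) by auto
  have vV: "v \<in> V" using v AB by auto
  have u1B: "u1 \<in> B" using ch u1 vV v AB by blast
  have nA: "\<forall>a\<in>A. c a \<noteq> 1"
  proof
    fix a assume a: "a \<in> A"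
    then have "E a u1" using ch u1 u1B AB by blast
    then show "c a \<noteq> 1" using pgc_proper[OF pg] a AB u1 by fastforce
  qed
  obtain u2 where u2: "u2 \<in> V" "E v u2" "c u2 = 2" using gv_nb[OF v(3), of 2] v(2) by auto
  have u2B: "u2 \<in> B" using ch u2 vV v AB by blast
  have nA2: "\<forall>a\<in>A. c a \<noteq> 2"
  proof
    fix a assume a: "a \<in> A"
    then have "E a u2" using ch u2 u2B AB by blast
    then show "c a \<noteq> 2" using pgc_proper[OF pg] a AB u2 by fastforce
  qed
  obtain w where w: "w \<in> V" "c w = 2" "grundy_vertex V E c w"
    using pg k unfolding partial_grundy_coloring_def by force
  obtain u where u: "u \<in> V" "E w u" "c u = 1" using gv_nb[OF w(3), of 1] w(2) by auto
  have "w \<in> B" using w nA2 AB by auto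
  then have "u \<in> A" using ch u w AB by blast
  then show False using nA u by auto
qed

lemma cb_bound:
  assumes "is_complete_bipartite V E n m" "partial_grundy_coloring V E c k"
  shows "k \<le> 2"
proof (rule ccontr)
  assume "\<not> k \<le> 2"
  then have k: "k \<ge> 3" by simp
  obtain A B where AB: "A \<inter> B = {}" "A \<union> B = V"
    and ch: "\<forall>u\<in>V. \<forall>v\<in>V. E u v \<longleftrightarrow> (u \<in> A \<and> v \<in> B) \<or> (u \<in> B \<and> v \<in> A)"
    using assms(1) unfolding is_complete_bipartite_def by blast
  obtain v where v: "v \<in> V" "c v = 3" "grundy_vertex V E c v"
    using assms(2) k unfolding partial_grundy_coloring_def by force
  show False
  proof (cases "v \<in> A")
    case True
    show False using cb_aux[OF AB ch assms(2) k True v(2,3)] by blast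
  next
    case False
    then have vB: "v \<in> B" using v AB by auto
    have AB': "B \<inter> A = {}" "B \<union> A = V" using AB by auto
    have ch': "\<forall>u\<in>V. \<forall>v\<in>V. E u v \<longleftrightarrow> (u \<in> B \<and> v \<in> A) \<or> (u \<in> A \<and> v \<in> B)" using ch by blast
    show False using cb_aux[OF AB' ch' assms(2) k vB v(2,3)] .
  qed
qed

lemma k2_bound:
  assumes "disjoint_union_K2 V E" "partial_grundy_coloring V E c k"
  shows "k \<le> 2"
proof (rule ccontr)
  assume "\<not> k \<le> 2"
  then have k: "k \<ge> 3" by simp
  obtain v where v: "v \<in> V" "c v = 3" "grundy_vertex V E c v"
    using assms(2) k unfolding partial_grundy_coloring_def by force
  obtain u1 where u1: "u1 \<in> V" "E v u1" "c u1 = 1" using gv_nb[OF v(3), of 1] v(2) by auto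
  obtain u2 where u2: "u2 \<in> V" "E v u2" "c u2 = 2" using gv_nb[OF v(3), of 2] v(2) by auto
  show False using assms(1) v u1 u2 unfolding disjoint_union_K2_def by force
qed

lemma cb_lower:
  assumes "is_complete_bipartite V E n m" "n \<ge> 2" "m \<ge> 1"
  shows "\<exists>c. partial_grundy_coloring V E c 2"
proof -
  obtain A B where AB: "A \<inter> B = {}" "A \<union> B = V" "card A = n" "card B = m"
    and ch: "\<forall>u\<in>V. \<forall>v\<in>V. E u v \<longleftrightarrow> (u \<in> A \<and> v \<in> B) \<or> (u \<in> B \<and> v \<in> A)"
    using assms(1) unfolding is_complete_bipartite_def by blast
  have "A \<noteq> {}" "B \<noteq> {}" using AB assms by auto
  then obtain a b where ab: "a \<in> A" "b \<in> B" by auto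
  define c where "c = (\<lambda>v. if v \<in> A then 1 else (2::nat))"
  have img: "c ` V = {1..2}"
  proof
    show "c ` V \<subseteq> {1..2}" unfolding c_def by auto
    show "{1..2} \<subseteq> c ` V"
    proof
      fix i :: nat assume "i \<in> {1..2}"
      then have "i = 1 \<or> i = 2" by auto
      then show "i \<in> c ` V"
      proof
        assume "i = 1" then show ?thesis using ab AB unfolding c_def by (intro image_eqI[of _ _ a]) auto
      next
        assume "i = 2" then show ?thesis using ab AB unfolding c_def by (intro image_eqI[of _ _ b]) auto
      qed
    qed
  qed
  have "partial_grundy_coloring V E c 2"
    unfolding partial_grundy_coloring_def proper_coloring_def
  proof (intro conjI ballI impI)
    show "c ` V = {1..2}" by (rule img)
    fix u v assume "u \<in> V" "v \<in> V" "E u v"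
    then show "c u \<noteq> c v" using ch AB unfolding c_def by auto
  next
    fix i :: nat assume "i \<in> {1..2}"
    then have "i = 1 \<or> i = 2" by auto
    then show "\<exists>v\<in>V. c v = i \<and> grundy_vertex V E c v"
    proof
      assume "i = 1" then show ?thesis using ab AB unfolding c_def grundy_vertex_def
        by (intro bexI[of _ a]) auto
    next
      assume "i = 2"
      have "E b a" using ch ab AB by auto
      then show ?thesis using \<open>i = 2\<close> ab AB unfolding c_def grundy_vertex_def
        by (intro bexI[of _ b]) (auto intro!: bexI[of _ a])
    qed
  qed
  then show ?thesis by blast
qed

lemma k2_lower:
  assumes sg: "simple_graph V E" and d: "disjoint_union_K2 V E"
  shows "\<exists>c. partial_grundy_coloring V E c 2"
proof -
  have fin: "finite V" and ne: "V \<noteq> {}" and irr: "\<And>v. \<not> E v v" and inV: "\<And>u v. E u v \<Longrightarrow> u \<in> V \<and> v \<in> V"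
    using sg unfolding simple_graph_def by auto
  obtain f :: "'a \<Rightarrow> nat" and n where f: "inj_on f V" using finite_imp_inj_to_nat_seg[OF fin] by blast
  define p where "p v = (THE u. u \<in> V \<and> E v u)" for v
  have ex: "\<And>v. v \<in> V \<Longrightarrow> \<exists>!u. u \<in> V \<and> E v u" using d unfolding disjoint_union_K2_def by blast
  have p: "\<And>v. v \<in> V \<Longrightarrow> p v \<in> V \<and> E v (p v)"
    unfolding p_def by (rule theI', erule ex)
  have pu: "\<And>v u. v \<in> V \<Longrightarrow> u \<in> V \<Longrightarrow> E v u \<Longrightarrow> u = p v"
  proof -
    fix v u assume a: "v \<in> V" "u \<in> V" "E v u"
    show "u = p v" unfolding p_def by (rule sym, rule the1_equality[OF ex[OF a(1)]]) (use a in auto)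
  qed
  define c where "c v = (if f v < f (p v) then 1 else (2::nat))" for v
  have diff: "\<And>u v. u \<in> V \<Longrightarrow> v \<in> V \<Longrightarrow> E u v \<Longrightarrow> c u \<noteq> c v"
  proof -
    fix u v assume uv: "u \<in> V" "v \<in> V" "E u v"
    have "E v u" using sg uv unfolding simple_graph_def by auto
    then have "v = p u" "u = p v" using pu uv by auto
    moreover have "f u \<noteq> f v" using f uv irr inj_on_eq_iff by metis
    ultimately show "c u \<noteq> c v" unfolding c_def by auto
  qed
  obtain v0 where v0: "v0 \<in> V" using ne by auto
  have img: "c ` V = {1..2}"
  proof
    show "c ` V \<subseteq> {1..2}" unfolding c_def by auto
    have "c v0 \<noteq> c (p v0)" using diff v0 p by auto
    moreover have "c v0 \<in> {1,2}" "c (p v0) \<in> {1,2}" unfolding c_def by auto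
    moreover have "c v0 \<in> c ` V" "c (p v0) \<in> c ` V" using v0 p by auto
    ultimately have "{1,2} \<subseteq> c ` V" by auto
    moreover have "{1..2::nat} = {1,2}" by auto
    ultimately show "{1..2} \<subseteq> c ` V" by simp
  qed
  have "partial_grundy_coloring V E c 2"
    unfolding partial_grundy_coloring_def proper_coloring_def
  proof (intro conjI ballI impI)
    show "c ` V = {1..2}" by (rule img)
    fix u v assume "u \<in> V" "v \<in> V" "E u v"
    then show "c u \<noteq> c v" using diff by auto
  next
    fix i :: nat assume "i \<in> {1..2}"
    then obtain w where w: "w \<in> V" "c w = i" using img by (metis imageE)
    have "grundy_vertex V E c w"
      unfolding grundy_vertex_def
    proof (intro conjI allI impI)
      show "w \<in> V" by fact
      fix j assume j: "1 \<le> j \<and> j < c w"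
      then have "c w = 2" "j = 1" unfolding c_def by (auto split: if_splits)
      moreover have "c (p w) \<noteq> c w" using diff w p by metis
      moreover have "c (p w) \<in> {1,2}" unfolding c_def by auto
      ultimately show "\<exists>u\<in>V. E w u \<and> c u = j" using p w by (intro bexI[of _ "p w"]) auto
    qed
    then show "\<exists>v\<in>V. c v = i \<and> grundy_vertex V E c v" using w by blast
  qed
  then show ?thesis by blast
qed

lemma three: "{1..3::nat} = {1,2,3}" by auto
lemma lt3: "1 \<le> j \<Longrightarrow> j < (3::nat) \<Longrightarrow> j = 1 \<or> j = 2" by auto
lemma gin3: "a \<in> S \<Longrightarrow> b \<in> S \<Longrightarrow> c \<in> S \<Longrightarrow> f a = 1 \<Longrightarrow> gin S E f a \<Longrightarrow> f b = 2 \<Longrightarrow> gin S E f b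
   \<Longrightarrow> f c = 3 \<Longrightarrow> gin S E f c \<Longrightarrow> \<forall>i\<in>{1..3}. \<exists>v\<in>S. f v = i \<and> gin S E f v"
  unfolding three by auto

lemma seed_tri:
  assumes sg: "simple_graph V E" and e: "E a b" "E b c" "E a c"
  shows "\<exists>S f. seed V E S f 3"
proof -
  have symE: "\<And>u v. E u v \<Longrightarrow> E v u" and irr: "\<And>v. \<not> E v v" and inV: "\<And>u v. E u v \<Longrightarrow> u \<in> V \<and> v \<in> V"
    using sg unfolding simple_graph_def by auto
  have d: "a \<noteq> b" "b \<noteq> c" "a \<noteq> c" using e irr by auto
  define f where "f v = (if v = c then 1 else if v = b then 2 else (3::nat))" for v
  have "seed V E {a,b,c} f 3"
    unfolding seed_def
  proof (intro conjI)
    show "{a,b,c} \<subseteq> V" using inV e by auto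
    show "f ` {a,b,c} = {1..3}" unfolding three f_def using d by auto
    show "\<forall>u\<in>{a,b,c}. \<forall>v\<in>{a,b,c}. E u v \<longrightarrow> f u \<noteq> f v" unfolding f_def using d irr by auto
    show "\<forall>i\<in>{1..3}. \<exists>v\<in>{a,b,c}. f v = i \<and> gin {a,b,c} E f v"
      by (rule gin3[of c _ b a]) (use d e symE in \<open>auto simp: f_def gin_def dest!: lt3\<close>)
  qed
  then show ?thesis by blast
qed

lemma seed_p4:
  assumes sg: "simple_graph V E" and e: "E a b" "E b c" "E c d" "\<not> E a d" "a \<noteq> c" "b \<noteq> d" "a \<noteq> d"
  shows "\<exists>S f. seed V E S f 3"
proof -
  have symE: "\<And>u v. E u v \<Longrightarrow> E v u" and irr: "\<And>v. \<not> E v v" and inV: "\<And>u v. E u v \<Longrightarrow> u \<in> V \<and> v \<in> V"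
    using sg unfolding simple_graph_def by auto
  have d: "a \<noteq> b" "b \<noteq> c" "c \<noteq> d" "a \<noteq> d" using e irr by auto
  define f where "f v = (if v = a \<or> v = d then 1 else if v = b then 2 else (3::nat))" for v
  have "seed V E {a,b,c,d} f 3"
    unfolding seed_def
  proof (intro conjI)
    show "{a,b,c,d} \<subseteq> V" using inV e by auto
    show "f ` {a,b,c,d} = {1..3}" unfolding three f_def using d e by auto
    show "\<forall>u\<in>{a,b,c,d}. \<forall>v\<in>{a,b,c,d}. E u v \<longrightarrow> f u \<noteq> f v" unfolding f_def using d e irr symE by auto
    show "\<forall>i\<in>{1..3}. \<exists>v\<in>{a,b,c,d}. f v = i \<and> gin {a,b,c,d} E f v"
      by (rule gin3[of a _ b c]) (use d e symE in \<open>auto simp: f_def gin_def dest!: lt3\<close>)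
  qed
  then show ?thesis by blast
qed

lemma seed_p3k2:
  assumes sg: "simple_graph V E" and e: "E x y" "E x z" "\<not> E y z" "E b u"
    and ne: "\<not> E x b" "\<not> E x u" "\<not> E y u" "\<not> E z b" "y \<noteq> z"
    and dd: "b \<noteq> y" "b \<noteq> z" "u \<noteq> y" "u \<noteq> z"
  shows "\<exists>S f. seed V E S f 3"
proof -
  have symE: "\<And>u v. E u v \<Longrightarrow> E v u" and irr: "\<And>v. \<not> E v v" and inV: "\<And>u v. E u v \<Longrightarrow> u \<in> V \<and> v \<in> V"
    using sg unfolding simple_graph_def by auto
  have d: "x \<noteq> y" "x \<noteq> z" "b \<noteq> u" "x \<noteq> b" "x \<noteq> u" using e ne irr symE by auto
  define f where "f v = (if v = y \<or> v = u then 1 else if v = z \<or> v = b then 2 else (3::nat))" for v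
  have "seed V E {x,y,z,b,u} f 3"
    unfolding seed_def
  proof (intro conjI)
    show "{x,y,z,b,u} \<subseteq> V" using inV e by auto
    show "f ` {x,y,z,b,u} = {1..3}" unfolding three f_def using d dd ne by auto
    show "\<forall>p\<in>{x,y,z,b,u}. \<forall>q\<in>{x,y,z,b,u}. E p q \<longrightarrow> f p \<noteq> f q" unfolding f_def using d dd e ne irr symE by auto
    show "\<forall>i\<in>{1..3}. \<exists>v\<in>{x,y,z,b,u}. f v = i \<and> gin {x,y,z,b,u} E f v"
      by (rule gin3[of y _ b x]) (use d dd e ne symE in \<open>auto simp: f_def gin_def dest!: lt3\<close>)
  qed
  then show ?thesis by blast
qed

lemma seed3_exists:
  assumes sg: "simple_graph V E" and ni: "no_isolated V E" and nk: "\<not> disjoint_union_K2 V E"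
    and nb: "\<not> (\<exists>n m. n \<ge> 2 \<and> m \<ge> 1 \<and> is_complete_bipartite V E n m)"
  shows "\<exists>S f. seed V E S f 3"
proof (rule ccontr)
  assume ns: "\<not> (\<exists>S f. seed V E S f 3)"
  have symE: "\<And>u v. E u v \<Longrightarrow> E v u" and irr: "\<And>v. \<not> E v v" and inV: "\<And>u v. E u v \<Longrightarrow> u \<in> V \<and> v \<in> V"
    and fin: "finite V" using sg unfolding simple_graph_def by auto
  have noT: "\<And>a b c. E a b \<Longrightarrow> E b c \<Longrightarrow> E a c \<Longrightarrow> False" using seed_tri[OF sg] ns by blast
  have noP: "\<And>a b c d. E a b \<Longrightarrow> E b c \<Longrightarrow> E c d \<Longrightarrow> a \<noteq> c \<Longrightarrow> b \<noteq> d \<Longrightarrow> a \<noteq> d \<Longrightarrow> E a d"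
    using seed_p4[OF sg] ns by blast
  obtain x where x: "x \<in> V" "\<not> (\<exists>!u. u \<in> V \<and> E x u)" using nk unfolding disjoint_union_K2_def by blast
  obtain y where y: "y \<in> V" "E x y" using ni x unfolding no_isolated_def by blast
  obtain z where z: "z \<in> V" "E x z" "z \<noteq> y" using x y by blast
  define A where "A = {v\<in>V. E x v}"
  define B where "B = V - A"
  have yA: "y \<in> A" and zA: "z \<in> A" using y z unfolding A_def by auto
  have xB: "x \<in> B" using x irr unfolding A_def B_def by auto
  have c1: "\<And>b a' a. b \<in> B \<Longrightarrow> b \<noteq> x \<Longrightarrow> a' \<in> A \<Longrightarrow> E b a' \<Longrightarrow> a \<in> A \<Longrightarrow> E b a"
  proof -
    fix b a' a assume h: "b \<in> B" "b \<noteq> x" "a' \<in> A" "E b a'" "a \<in> A"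
    show "E b a"
    proof (cases "a = a'")
      case True then show ?thesis using h by simp
    next
      case False
      have "E a' x" "E x a" using h symE unfolding A_def by auto
      moreover have "b \<noteq> a" using h unfolding B_def by auto
      ultimately show ?thesis using noP[of b a' x a] h False by auto
    qed
  qed
  have c2: "\<And>b. b \<in> B \<Longrightarrow> b \<noteq> x \<Longrightarrow> \<exists>a\<in>A. E b a"
  proof (rule ccontr)
    fix b assume b: "b \<in> B" "b \<noteq> x" and nbA: "\<not> (\<exists>a\<in>A. E b a)"
    obtain u where u: "u \<in> V" "E b u" using ni b unfolding no_isolated_def B_def by blast
    have uA: "u \<notin> A" using nbA u by auto
    have bA: "b \<notin> A" using b unfolding B_def by auto
    have ux: "u \<noteq> x"
    proof
      assume "u = x"
      then have "E x b" using u symE by auto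
      then show False using bA b inV unfolding A_def by auto
    qed
    have uB: "u \<in> B" using u uA unfolding B_def by auto
    have nu: "\<not> (\<exists>a\<in>A. E u a)"
    proof
      assume "\<exists>a\<in>A. E u a"
      then obtain a where "a \<in> A" "E u a" by blast
      then have "E u y" using c1[OF uB ux] yA by blast
      moreover have "E y x" using y symE by auto
      moreover have "b \<noteq> y" using bA yA by auto
      ultimately have "E b x" using noP[of b u y x] u b(2) ux by auto
      then show False using bA b symE unfolding A_def B_def by auto
    qed
    have "\<not> E y z" using noT y z by blast
    moreover have "\<not> E x b" "\<not> E x u" using bA uA b u inV unfolding A_def B_def by auto
    moreover have "\<not> E y u" using nu yA symE by blast
    moreover have "\<not> E z b" using nbA zA symE by blast
    moreover have "b \<noteq> y" "b \<noteq> z" "u \<noteq> y" "u \<noteq> z" using bA uA yA zA by auto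
    ultimately show False using seed_p3k2[OF sg, of x y z b u] y z u ns by auto
  qed
  have cb: "is_complete_bipartite V E (card A) (card B)"
    unfolding is_complete_bipartite_def
  proof (rule exI[of _ A], rule exI[of _ B], intro conjI)
    show "A \<inter> B = {}" unfolding B_def by auto
    show "A \<union> B = V" unfolding A_def B_def by auto
    show "card A = card A" "card B = card B" by simp_all
    show "\<forall>u\<in>V. \<forall>v\<in>V. E u v = (u \<in> A \<and> v \<in> B \<or> u \<in> B \<and> v \<in> A)"
    proof (intro ballI iffI)
      fix u v assume uv: "u \<in> V" "v \<in> V" "E u v"
      have "\<not> (u \<in> A \<and> v \<in> A)" using noT[of x u v] uv unfolding A_def by auto
      moreover have "\<not> (u \<in> B \<and> v \<in> B)"
      proof
        assume h: "u \<in> B \<and> v \<in> B"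
        have "u \<noteq> x" using h uv unfolding A_def B_def by auto
        moreover have "v \<noteq> x" using h uv symE unfolding A_def B_def by auto
        ultimately have "E u y" "E v y" using c1 c2 h yA by blast+
        then show False using noT[of u v y] uv by auto
      qed
      ultimately show "u \<in> A \<and> v \<in> B \<or> u \<in> B \<and> v \<in> A" using uv unfolding B_def by auto
    next
      fix u v assume uv: "u \<in> V" "v \<in> V" and h: "u \<in> A \<and> v \<in> B \<or> u \<in> B \<and> v \<in> A"
      have gen: "\<And>a b. a \<in> A \<Longrightarrow> b \<in> B \<Longrightarrow> E b a"
      proof -
        fix a b assume ab: "a \<in> A" "b \<in> B"
        show "E b a"
        proof (cases "b = x")
          case True then show ?thesis using ab unfolding A_def by auto
        next
          case False then show ?thesis using c1 c2 ab by blast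
        qed
      qed
      show "E u v" using h gen symE by blast
    qed
  qed
  have finA: "finite A" and finB: "finite B" using fin unfolding A_def B_def by auto
  have "card {y, z} \<le> card A" using yA zA finA by (intro card_mono) auto
  then have "card A \<ge> 2" using z by auto
  moreover have "card B \<ge> 1" using xB finB by (metis One_nat_def Suc_leI card_gt_0_iff empty_iff)
  ultimately show False using nb cb by blast
qed

theorem mainTheorem4:
  fixes V :: "'a set" and E :: "'a \<Rightarrow> 'a \<Rightarrow> bool"
  assumes "simple_graph V E" and "no_isolated V E"
  shows "partial_grundy_number V E = 2 \<longleftrightarrow>
           ((\<exists>n m. n \<ge> 2 \<and> m \<ge> 1 \<and> is_complete_bipartite V E n m) \<or> disjoint_union_K2 V E)"
proof -
  define K where "K = {k. \<exists>c. partial_grundy_coloring V E c k}"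
  have fin: "finite V" using assms(1) unfolding simple_graph_def by auto
  have finK: "finite K"
  proof (rule finite_subset)
    show "K \<subseteq> {..card V}" unfolding K_def using pgc_le[OF fin] by auto
  qed auto
  show ?thesis
  proof
    assume h: "partial_grundy_number V E = 2"
    show "(\<exists>n m. n \<ge> 2 \<and> m \<ge> 1 \<and> is_complete_bipartite V E n m) \<or> disjoint_union_K2 V E"
    proof (rule ccontr)
      assume "\<not> ?thesis"
      then obtain S f where "seed V E S f 3" using seed3_exists[OF assms] by blast
      then obtain c k where "3 \<le> k" "partial_grundy_coloring V E c k" using seed_to_pgc[OF assms(1)] by blast
      then have "k \<in> K" "3 \<le> k" unfolding K_def by auto
      then have "3 \<le> Max K" using finK Max_ge order_trans by blast
      then show False using h unfolding partial_grundy_number_def K_def by simp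
    qed
  next
    assume h: "(\<exists>n m. n \<ge> 2 \<and> m \<ge> 1 \<and> is_complete_bipartite V E n m) \<or> disjoint_union_K2 V E"
    have in2: "2 \<in> K" using h cb_lower k2_lower[OF assms(1)] unfolding K_def by blast
    have le2: "\<forall>k\<in>K. k \<le> 2" using h cb_bound k2_bound unfolding K_def by blast
    have "Max K = 2" using Max_eqI[OF finK] in2 le2 by blast
    then show "partial_grundy_number V E = 2" unfolding partial_grundy_number_def K_def by simp
  qed
qed

end
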